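(* Fix $q\in(0,1]$ and $s\in(0,2]$. As $d\to\infty$, $$\bar\sigma_{0,q}^2(s,d)=\frac{2q}d+\frac{(2-s)(6-q)}{2d^2}+o\Big(\frac1{d^2}\Big).$$
   Context: For $q\in(0,1]$, integer $d\ge1$ and $s>0$: $q_d(n)=\binom dn(q/2)^n(1-q/2)^{d-n}$, $I_{0,q}(s,d)=q^{-s}2^{s/2}\sum_{n=1}^dq_d(n)\Gamma(n/2+s/2)/\Gamma(n/2)$, and $\bar\sigma_{0,q}(s,d)=I_{0,q}(s,d)^{-1/s}$. (This is the critical weight standard deviation preserving the $s$-th moment of layer-output norms in a zero-bias width-$d$ ReLU network with i.i.d. $\mathcal N(0,\sigma^2)$ weights and dropout with keep probability $q$ and rescaling $1/q$.) *)

theory Defs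
  imports "HOL-Analysis.Analysis" "HOL-Library.Landau_Symbols"
begin

definition qd :: "real \<Rightarrow> nat \<Rightarrow> nat \<Rightarrow> real" where
  "qd q d n = real (d choose n) * (q/2)^n * (1 - q/2)^(d-n)"

definition I0 :: "real \<Rightarrow> real \<Rightarrow> nat \<Rightarrow> real" where
  "I0 q s d = q powr (-s) * 2 powr (s/2) *
     (\<Sum>n=1..d. qd q d n * Gamma (real n/2 + s/2) / Gamma (real n/2))"

definition sigma_bar :: "real \<Rightarrow> real \<Rightarrow> nat \<Rightarrow> real" where
  "sigma_bar q s d = I0 q s d powr (-1/s)"

end

theory Submission
  imports Defs "HOL-Real_Asymp.Real_Asymp"
begin


lemma ln_lower3: fixes t::real assumes "0 \<le> t" shows "t - t^2/2 \<le> ln (1+t)"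
proof -
  have "(\<lambda>t. ln (1+t) - t + t^2/2) 0 \<le> (\<lambda>t. ln (1+t) - t + t^2/2) t"
  proof (rule DERIV_nonneg_imp_nondecreasing[OF assms])
    fix x :: real assume x: "0 \<le> x" "x \<le> t"
    show "\<exists>y. ((\<lambda>t. ln (1+t) - t + t^2/2) has_real_derivative y) (at x) \<and> 0 \<le> y"
      apply (rule exI[of _ "1/(1+x) - 1 + x"])
      apply (intro conjI)
      using x apply (auto intro!: derivative_eq_intros simp: field_simps)
      done
  qed
  then show ?thesis by simp
qed

lemma ln_upper3: fixes t::real assumes "0 \<le> t" shows "ln (1+t) \<le> t - t^2/2 + t^3/3"
proof -
  have "(\<lambda>t. t - t^2/2 + t^3/3 - ln (1+t)) 0 \<le> (\<lambda>t. t - t^2/2 + t^3/3 - ln (1+t)) t"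
  proof (rule DERIV_nonneg_imp_nondecreasing[OF assms])
    fix x :: real assume x: "0 \<le> x" "x \<le> t"
    have "0 \<le> x^3/(1+x)" using x by auto
    also have "x^3/(1+x) = 1 - x + x^2 - 1/(1+x)" using x by (simp add: field_simps power3_eq_cube power2_eq_square) 
    finally show "\<exists>y. ((\<lambda>t. t - t^2/2 + t^3/3 - ln (1+t)) has_real_derivative y) (at x) \<and> 0 \<le> y"
      apply -
      apply (rule exI[of _ "1 - x + x^2 - 1/(1+x)"])
      apply (intro conjI)
      using x apply (auto intro!: derivative_eq_intros simp: field_simps power2_eq_square)
      done
  qed
  then show ?thesis by simp
qed

lemma exp_quad: fixes w::real assumes "w \<le> 1" shows "\<bar>exp w - 1 - w\<bar> \<le> w^2"
proof (cases "0 \<le> w")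
  case True
  then show ?thesis using exp_bound[OF True assms] exp_ge_add_one_self[of w] zero_le_power2[of w] by (simp only: abs_le_iff) linarith
next
  case False
  define u where "u = -w"
  have u: "u > 0" using False u_def by auto
  have e1: "1 + u + u^2/2 \<le> exp u" using exp_lower_Taylor_quadratic[of u] u by auto
  have p0: "0 < 1 + u + u^2/2" using u by (simp add: add_pos_nonneg)
  have "exp w = 1 / exp u" by (simp add: u_def exp_minus field_simps)
  also have "\<dots> \<le> 1 / (1 + u + u^2/2)" using e1 p0 by (intro divide_left_mono) (simp_all add: p0)
  also have "\<dots> \<le> 1 - u + u^2"
  proof -
    have p: "0 < 1 + u + u^2/2" using u by (simp add: add_pos_nonneg)
    have eq: "(1 - u + u^2) * (1 + u + u^2/2) = 1 + u^2/2 + u^3/2 + u^4/2" by (simp add: field_simps eval_nat_numeral)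
    have "0 \<le> u^2/2 + u^3/2 + u^4/2" using u by simp
    then have "1 \<le> (1 - u + u^2) * (1 + u + u^2/2)" unfolding eq by linarith
    then show ?thesis using p by (subst divide_le_eq) simp
  qed
  finally have "exp w \<le> 1 + w + w^2" by (simp add: u_def)
  moreover have "1 + w \<le> exp w" by (rule exp_ge_add_one_self)
  ultimately show ?thesis using zero_le_power2[of w] by (simp only: abs_le_iff) linarith
qed

definition gv :: "real \<Rightarrow> real \<Rightarrow> real" where
  "gv a x = ln (Gamma (x+a)) - ln (Gamma x) - a * ln x - a*(a-1)/(2*x)"

lemma Gamma_real_plus1: fixes x::real assumes "x > 0" shows "Gamma (x+1) = x * Gamma x"
proof -
  have "x \<notin> \<int>\<^sub>\<le>\<^sub>0" using assms nonpos_Ints_nonpos by fastforce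
  then show ?thesis by (rule Gamma_plus1)
qed

lemma gv_step: assumes "x > 0" "a > 0"
  shows "gv a (x+1) - gv a x = ln (1 + a*(1/x)) - a * ln (1 + 1/x) + a*(a-1)*(1/x)^2/(2*(1+1/x))"
proof -
  have g1: "Gamma (x+1+a) = (x+a) * Gamma (x+a)" using Gamma_real_plus1[of "x+a"] assms by (simp add: add_ac)
  have g2: "Gamma (x+1) = x * Gamma x" using Gamma_real_plus1 assms by simp
  have p1: "Gamma (x+a) > 0" "Gamma x > 0" using assms by (auto intro!: Gamma_real_pos)
  have "ln (Gamma (x+1+a)) = ln (x+a) + ln (Gamma (x+a))" unfolding g1 by (rule ln_mult_pos) (use p1 assms in auto)
  moreover have "ln (Gamma (x+1)) = ln x + ln (Gamma x)" unfolding g2 by (rule ln_mult_pos) (use p1 assms in auto)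
  moreover have "ln (1 + a*(1/x)) = ln (x+a) - ln x"
  proof -
    have "1 + a*(1/x) = (x+a)/x" using assms by (simp add: field_simps)
    then show ?thesis using assms by (simp add: ln_divide_pos)
  qed
  moreover have "ln (1 + 1/x) = ln (x+1) - ln x"
  proof -
    have "1 + 1/x = (x+1)/x" using assms by (simp add: field_simps)
    then show ?thesis using assms by (simp add: ln_divide_pos)
  qed
  moreover have "a*(a-1)*(1/x)^2/(2*(1+1/x)) = a*(a-1)/(2*x) - a*(a-1)/(2*(x+1))"
  proof -
    have x1: "x + 1 \<noteq> 0" "1 + x \<noteq> 0" "x \<noteq> 0" using assms by auto
    have "(1/x)^2/(2*(1+1/x)) = 1/(2*x*(x+1))" using x1 by (simp add: field_simps power2_eq_square)
    moreover have "1/(2*x) - 1/(2*(x+1)) = 1/(2*x*(x+1))" using x1 by (simp add: field_simps)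
    ultimately have "(1/x)^2/(2*(1+1/x)) = 1/(2*x) - 1/(2*(x+1))" by simp
    then have "a*(a-1)*((1/x)^2/(2*(1+1/x))) = a*(a-1)*(1/(2*x) - 1/(2*(x+1)))" by simp
    then show ?thesis by (simp add: algebra_simps)
  qed
  ultimately show ?thesis unfolding gv_def
  proof -
    assume f1: "ln (Gamma (x+1+a)) = ln (x+a) + ln (Gamma (x+a))" and f2: "ln (Gamma (x+1)) = ln x + ln (Gamma x)"
      and f3: "ln (1 + a*(1/x)) = ln (x+a) - ln x" and f4: "ln (1 + 1/x) = ln (x+1) - ln x"
      and f5: "a*(a-1)*(1/x)^2/(2*(1+1/x)) = a*(a-1)/(2*x) - a*(a-1)/(2*(x+1))"
    have f4a: "a * ln (1 + 1/x) = a * ln (x+1) - a * ln x" unfolding f4 by (simp add: algebra_simps)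
    show "ln (Gamma (x + 1 + a)) - ln (Gamma (x + 1)) - a * ln (x + 1) - a * (a - 1) / (2 * (x + 1)) -
    (ln (Gamma (x + a)) - ln (Gamma x) - a * ln x - a * (a - 1) / (2 * x)) =
    ln (1 + a * (1 / x)) - a * ln (1 + 1 / x) + a * (a - 1) * (1 / x)\<^sup>2 / (2 * (1 + 1 / x))"
      using f1 f2 f3 f4a f5 by linarith
  qed
qed

lemma delta_bound: fixes a u :: real assumes a: "0 < a" "a \<le> 1" and u: "0 < u" "u \<le> 1"
  shows "\<bar>ln (1 + a*u) - a * ln (1 + u) + a*(a-1)*u^2/(2*(1+u))\<bar> \<le> u^3"
proof -
  have au: "0 \<le> a*u" using a u by simp
  note l1 = ln_lower3[OF au] ln_upper3[OF au]
  have l2: "a*u - a*u^2/2 \<le> a * ln (1+u)" "a * ln (1+u) \<le> a*u - a*u^2/2 + a*u^3/3"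
  proof -
    have "a*(u - u^2/2) \<le> a * ln (1+u)" using ln_lower3[of u] u a by (intro mult_left_mono) auto
    then show "a*u - a*u^2/2 \<le> a * ln (1+u)" by (simp add: algebra_simps)
    have "a * ln (1+u) \<le> a*(u - u^2/2 + u^3/3)" using ln_upper3[of u] u a by (intro mult_left_mono) auto
    then show "a * ln (1+u) \<le> a*u - a*u^2/2 + a*u^3/3" by (simp add: algebra_simps)
  qed
  have idt: "a*(a-1)*u^2/(2*(1+u)) = -(a*(1-a)*u^2/2) + a*(1-a)*u^3/(2*(1+u))"
    using u by (simp add: field_simps power2_eq_square power3_eq_cube)
  have e0a: "0 \<le> a*(1-a)" using a by simp
  have sq0: "0 \<le> (a-1/2)^2" by simp
  have "(a-1/2)^2 = a^2 - a + 1/4" "a*(1-a) = a - a^2" by (simp_all add: power2_eq_square algebra_simps)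
  then have e0b: "a*(1-a) \<le> 1/4" using sq0 by linarith
  note e0 = e0a e0b
  have B0: "0 \<le> a*(1-a)*u^3/(2*(1+u))" using e0 u by simp
  have B1: "a*(1-a)*u^3/(2*(1+u)) \<le> u^3/8"
  proof -
    have "a*(1-a)*u^3/(2*(1+u)) \<le> ((1/4) * u^3)/(2*(1+u))" using e0 u by (intro divide_right_mono mult_right_mono) auto
    also have "\<dots> \<le> ((1/4) * u^3)/2" using u by (intro divide_left_mono) auto
    finally show ?thesis by simp
  qed
  have sq: "(a*u)^2 = a^2*u^2" "(a*u)^3 = a^3*u^3" by (simp_all add: power_mult_distrib)
  have e2: "a*(1-a)*u^2 = a*u^2 - a^2*u^2" by (simp add: algebra_simps power2_eq_square)
  have c1: "a*u^3 \<le> u^3" using a u by simp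
  have c2: "a^3*u^3 \<le> u^3" using a u by (simp add: power_le_one)
  have c3: "0 \<le> a*u^3" using a u by simp
  have l1': "a*u - a^2*u^2/2 \<le> ln (1+a*u)" "ln (1+a*u) \<le> a*u - a^2*u^2/2 + a^3*u^3/3"
    using l1 unfolding sq by auto
  show ?thesis unfolding idt abs_le_iff
  proof (intro conjI)
    show "ln (1 + a * u) - a * ln (1 + u) + (- (a * (1 - a) * u\<^sup>2 / 2) + a * (1 - a) * u ^ 3 / (2 * (1 + u))) \<le> u ^ 3"
      using l1' l2 e2 c1 c2 c3 B0 B1 by linarith
    show "- (ln (1 + a * u) - a * ln (1 + u) + (- (a * (1 - a) * u\<^sup>2 / 2) + a * (1 - a) * u ^ 3 / (2 * (1 + u)))) \<le> u ^ 3"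
      using l1' l2 e2 c1 c2 c3 B0 B1 by linarith
  qed
qed




lemma not_npi: fixes x::real assumes "x > 0" shows "x \<notin> \<int>\<^sub>\<le>\<^sub>0"
  using assms nonpos_Ints_nonpos by fastforce

lemma gv_lim: fixes x a :: real assumes x: "x>0" and a: "a>0" shows "(\<lambda>m. gv a (x + real m)) \<longlonglongrightarrow> 0"
proof -
  define L where "L = Gamma (x+a) / Gamma x"
  have gp: "Gamma (x+a) > 0" "Gamma x > 0" using x a by (auto intro!: Gamma_real_pos)
  have L0: "L > 0" using gp L_def by simp
  define R where "R m = Gamma_series (x+a) m / Gamma_series x m" for m
  have Rl: "R \<longlonglongrightarrow> L" unfolding L_def R_def by (intro tendsto_divide Gamma_series_LIMSEQ) (use gp in auto)
  have lnR: "(\<lambda>m. ln (R m)) \<longlonglongrightarrow> ln L" by (rule tendsto_ln[OF Rl]) (use L0 in auto)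
  have key: "gv a (x + real (Suc m)) = ln L - ln (R m) - a * ln ((x + real (Suc m))/real m) - a*(a-1)/(2*(x + real (Suc m)))"
    if m: "m \<ge> 1" for m
  proof -
    define y where "y = x + real (Suc m)"
    have y: "y > 0" using x y_def by simp
    have gy: "Gamma y > 0" "Gamma (y+a) > 0" using y a by (auto intro!: Gamma_real_pos)
    have p1: "pochhammer x (m+1) = Gamma y / Gamma x" using pochhammer_Gamma[OF not_npi[OF x], of "m+1"] y_def by simp
    have p2: "pochhammer (x+a) (m+1) = Gamma (y+a) / Gamma (x+a)" using pochhammer_Gamma[OF not_npi[of "x+a"], of "m+1"] x a y_def
      by (simp add: add_ac)
    have ex: "exp ((x+a) * ln (real m)) = exp (a * ln (real m)) * exp (x * ln (real m))"
      by (simp add: distrib_right exp_add)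
    have fm: "fact m > (0::real)" by simp
    have e1: "R m = exp (a * ln (real m)) * (Gamma y / Gamma x) * (Gamma (x+a) / Gamma (y+a))"
    proof -
      define Ea where "Ea = exp (a * ln (real m))"
      define Ex where "Ex = exp (x * ln (real m))"
      define A where "A = Gamma (x+a)"
      define B where "B = Gamma x"
      define C where "C = Gamma y"
      define D where "D = Gamma (y+a)"
      define F where "F = (fact m :: real)"
      have pos: "Ea > 0" "Ex > 0" "A > 0" "B > 0" "C > 0" "D > 0" "F > 0"
        using gp gy fm unfolding Ea_def Ex_def A_def B_def C_def D_def F_def by auto
      have "R m = (F * (Ea * Ex) / (D / A)) / (F * Ex / (C / B))"
        unfolding R_def Gamma_series_def p1 p2 of_real_eq_id id_def ex Ea_def Ex_def A_def B_def C_def D_def F_def by simp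
      also have "\<dots> = Ea * (C / B) * (A / D)" using pos by (simp add: field_simps)
      finally show ?thesis unfolding Ea_def A_def B_def C_def D_def .
    qed
    have "ln (R m) = a * ln (real m) + (ln (Gamma y) - ln (Gamma x)) + (ln (Gamma (x+a)) - ln (Gamma (y+a)))"
      unfolding e1 using gp gy by (simp add: ln_mult_pos ln_divide_pos)
    moreover have "ln L = ln (Gamma (x+a)) - ln (Gamma x)" unfolding L_def using gp by (simp add: ln_divide_pos)
    moreover have "a * ln (y / real m) = a * ln y - a * ln (real m)" using y m by (simp add: ln_divide_pos algebra_simps)
    ultimately show ?thesis unfolding y_def[symmetric] gv_def by linarith
  qed
  have l2: "(\<lambda>m. (x + real (Suc m))/real m) \<longlonglongrightarrow> 1" by real_asymp
  have l3: "(\<lambda>m. ln ((x + real (Suc m))/real m)) \<longlonglongrightarrow> 0" using tendsto_ln[OF l2] by simp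
  have l4: "(\<lambda>m. a*(a-1)/(2*(x + real (Suc m)))) \<longlonglongrightarrow> 0" by real_asymp
  have "(\<lambda>m. ln L - ln (R m) - a * ln ((x + real (Suc m))/real m) - a*(a-1)/(2*(x + real (Suc m)))) \<longlonglongrightarrow> ln L - ln L - a * 0 - 0"
    by (intro tendsto_intros lnR l3 l4)
  then have lim0: "(\<lambda>m. ln L - ln (R m) - a * ln ((x + real (Suc m))/real m) - a*(a-1)/(2*(x + real (Suc m)))) \<longlonglongrightarrow> 0"
    by simp
  have ev: "eventually (\<lambda>m. ln L - ln (R m) - a * ln ((x + real (Suc m))/real m) - a*(a-1)/(2*(x + real (Suc m))) = gv a (x + real (Suc m))) sequentially"
    using eventually_ge_at_top[of "1::nat"] by eventually_elim (rule key[symmetric], simp)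
  have "(\<lambda>m. gv a (x + real (Suc m))) \<longlonglongrightarrow> 0" by (rule Lim_transform_eventually[OF lim0 ev])
  then show ?thesis by (rule LIMSEQ_imp_Suc[where f="\<lambda>m. gv a (x + real m)"]) 
qed

lemma cube_tele: fixes y::real assumes "y \<ge> 1"
  shows "(1/y)^3 \<le> (1/2)*(1/(y-1/2)^2 - 1/(y+1/2)^2)"
proof -
  define A where "A = (y-1/2)^2" define B where "B = (y+1/2)^2"
  have A: "A > 0" "B > 0" using assms unfolding A_def B_def by auto
  have AB: "A*B = (y^2-1/4)^2" unfolding A_def B_def by (simp add: power2_eq_square algebra_simps)
  have BA: "B - A = 2*y" unfolding A_def B_def by (simp add: power2_eq_square algebra_simps)
  have "1/A - 1/B = (B - A)/(A*B)" using A by (simp add: field_simps)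
  also have "\<dots> = 2*y/(y^2-1/4)^2" unfolding AB BA ..
  finally have e: "1/A - 1/B = 2*y/(y^2-1/4)^2" .
  have "1 \<le> y^2" using assms by (simp add: one_le_power)
  then have y2: "0 \<le> y^2 - 1/4" "y^2 - 1/4 \<le> y^2" by auto
  have q: "(y^2-1/4)^2 \<le> (y^2)^2" using y2 by (intro power_mono) auto
  have qp: "0 < (y^2-1/4)^2" using \<open>1 \<le> y^2\<close> by simp
  have "2*y/(y^2)^2 \<le> 2*y/(y^2-1/4)^2" using q qp assms by (intro divide_left_mono) auto
  moreover have "2*y/(y^2)^2 = 2*(1/y)^3" using assms by (simp add: field_simps power2_eq_square power3_eq_cube)
  ultimately show ?thesis unfolding A_def[symmetric] B_def[symmetric] e by simp
qed

lemma gv_step_bound: fixes a y :: real assumes a: "0 < a" "a \<le> 1" and y: "y \<ge> 1"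
  shows "\<bar>gv a (y+1) - gv a y\<bar> \<le> (1/y)^3"
proof -
  have eq: "gv a (y+1) - gv a y = ln (1 + a*(1/y)) - a * ln (1 + 1/y) + a*(a-1)*(1/y)^2/(2*(1+1/y))"
    by (rule gv_step) (use a y in auto)
  have d: "\<bar>ln (1 + a*(1/y)) - a * ln (1 + 1/y) + a*(a-1)*(1/y)^2/(2*(1+1/y))\<bar> \<le> (1/y)^3"
    by (rule delta_bound) (use a y in auto)
  show ?thesis unfolding eq by (rule d)
qed

lemma gv_tele: fixes a x :: real assumes a: "0 < a" "a \<le> 1" and x: "x \<ge> 1"
  shows "\<bar>gv a x\<bar> \<le> \<bar>gv a (x + real M)\<bar> + 2/x^2"
proof -
  have tel1: "gv a (x + real M) - gv a x = (\<Sum>k<M. gv a (x + real (Suc k)) - gv a (x + real k))"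
    using sum_lessThan_telescope[of "\<lambda>i. gv a (x + real i)" M] by simp
  have each: "\<bar>gv a (x + real (Suc k)) - gv a (x + real k)\<bar> \<le> (1/2)*(1/(x + real k-1/2)^2 - 1/(x + real (Suc k)-1/2)^2)" for k
  proof -
    have "\<bar>gv a (x + real (Suc k)) - gv a (x + real k)\<bar> \<le> (1/(x + real k))^3"
      using gv_step_bound[OF a, of "x + real k"] x by (simp add: add_ac)
    also have "\<dots> \<le> (1/2)*(1/(x + real k-1/2)^2 - 1/(x + real k+1/2)^2)" using cube_tele[of "x + real k"] x by simp
    finally show ?thesis by (simp add: add_ac)
  qed
  have tel2: "(\<Sum>k<M. (1/2)*(1/(x + real k-1/2)^2 - 1/(x + real (Suc k)-1/2)^2)) = (1/2)*(1/(x-1/2)^2 - 1/(x + real M - 1/2)^2)"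
    using sum_lessThan_telescope[of "\<lambda>i. -(1/2)*(1/(x + real i-1/2)^2)" M] by (simp add: sum_distrib_left[symmetric] algebra_simps)
  have "\<bar>gv a (x + real M) - gv a x\<bar> \<le> (\<Sum>k<M. \<bar>gv a (x + real (Suc k)) - gv a (x + real k)\<bar>)"
    unfolding tel1 by (rule sum_abs)
  also have "\<dots> \<le> (\<Sum>k<M. (1/2)*(1/(x + real k-1/2)^2 - 1/(x + real (Suc k)-1/2)^2))"
    by (rule sum_mono) (rule each)
  also have "\<dots> \<le> (1/2)*(1/(x-1/2)^2)" unfolding tel2 by simp
  also have "\<dots> \<le> 2/x^2"
  proof -
    have "(x/2)^2 \<le> (x-1/2)^2" using x by (intro power_mono) auto
    then have "1/(x-1/2)^2 \<le> 1/(x/2)^2" using x by (intro divide_left_mono) auto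
    then show ?thesis by (simp add: power_divide)
  qed
  finally show ?thesis by linarith
qed

lemma gv_bound: fixes a x :: real assumes a: "0 < a" "a \<le> 1" and x: "x \<ge> 1"
  shows "\<bar>gv a x\<bar> \<le> 2/x^2"
proof -
  have "(\<lambda>M. \<bar>gv a (x + real M)\<bar> + 2/x^2) \<longlonglongrightarrow> \<bar>0\<bar> + 2/x^2"
    by (intro tendsto_intros gv_lim) (use a x in auto)
  then have "\<bar>gv a x\<bar> \<le> \<bar>0\<bar> + 2/x^2" by (rule LIMSEQ_le_const) (use gv_tele[OF a x] in auto)
  then show ?thesis by simp
qed

lemma gamma_ratio: fixes a x :: real assumes a: "0 < a" "a \<le> 1" and x: "x \<ge> 2"
  shows "\<bar>Gamma (x+a) / Gamma x - x powr a * (1 + a*(a-1)/(2*x))\<bar> \<le> 4 * x powr (a-2)"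
proof -
  define v where "v = gv a x"
  define c where "c = a*(a-1)/(2*x)"
  define w where "w = c + v"
  have gp: "Gamma (x+a) > 0" "Gamma x > 0" using x a by (auto intro!: Gamma_real_pos)
  have v: "\<bar>v\<bar> \<le> 2/x^2" unfolding v_def using gv_bound[OF a, of x] x by simp
  have e0: "0 \<le> a*(1-a)" "a*(1-a) \<le> 1/4"
  proof -
    show "0 \<le> a*(1-a)" using a by simp
    have "0 \<le> (a-1/2)^2" by simp
    moreover have "(a-1/2)^2 = a^2 - a + 1/4" "a*(1-a) = a - a^2" by (simp_all add: power2_eq_square algebra_simps)
    ultimately show "a*(1-a) \<le> 1/4" by linarith
  qed
  have c: "\<bar>c\<bar> \<le> 1/(8*x)"
  proof -
    have "\<bar>c\<bar> = a*(1-a)/(2*x)" unfolding c_def using e0 x by (simp add: abs_divide abs_mult algebra_simps)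
    also have "\<dots> \<le> (1/4)/(2*x)" using e0 x by (intro divide_right_mono) auto
    finally show ?thesis by simp
  qed
  have x2: "2/x^2 \<le> 1/x" using x by (simp add: field_simps power2_eq_square)
  have wt: "\<bar>w\<bar> \<le> \<bar>c\<bar> + \<bar>v\<bar>" unfolding w_def by (rule abs_triangle_ineq)
  have s98: "1/(8*x) + 1/x = (9/8)/x" using x by (simp add: field_simps)
  have w: "\<bar>w\<bar> \<le> (9/8)/x" using wt c v x2 s98 by linarith
  have "(9/8)/x \<le> 9/16" using x by (simp add: divide_le_eq)
  then have w1: "w \<le> 1" using w by linarith
  have ratio: "Gamma (x+a) / Gamma x = x powr a * exp w"
  proof -
    have "ln (Gamma (x+a)) - ln (Gamma x) = a * ln x + w" unfolding w_def c_def v_def gv_def by simp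
    then have l: "ln (Gamma (x+a) / Gamma x) = a * ln x + w" using gp by (simp add: ln_divide_pos)
    have q: "Gamma (x+a) / Gamma x > 0" using gp by simp
    have "Gamma (x+a) / Gamma x = exp (ln (Gamma (x+a) / Gamma x))" using q by simp
    then have "Gamma (x+a) / Gamma x = exp (a * ln x + w)" unfolding l .
    then show ?thesis using x by (simp add: powr_def exp_add)
  qed
  have "\<bar>Gamma (x+a) / Gamma x - x powr a * (1 + a*(a-1)/(2*x))\<bar> = x powr a * \<bar>exp w - 1 - w + v\<bar>"
  proof -
    have "x powr a * exp w - x powr a * (1 + c) = x powr a * (exp w - 1 - w + v)" by (simp add: w_def algebra_simps)
    then show ?thesis unfolding ratio c_def[symmetric] by (simp add: abs_mult)
  qed
  also have "\<dots> \<le> x powr a * (w^2 + 2/x^2)"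
  proof (intro mult_left_mono)
    show "\<bar>exp w - 1 - w + v\<bar> \<le> w^2 + 2/x^2" using exp_quad[OF w1] v by linarith
  qed simp
  also have "\<dots> \<le> x powr a * (4/x^2)"
  proof (intro mult_left_mono)
    have "w^2 \<le> ((9/8)/x)^2" using w by (metis abs_ge_zero power2_abs power_mono)
    moreover have "((9/8)/x)^2 = (81/64) * (1/x^2)" by (simp add: power_divide)
    moreover have "2/x^2 = 2 * (1/x^2)" "4/x^2 = 4*(1/x^2)" by simp_all
    moreover have "0 \<le> 1/x^2" by simp
    ultimately show "w^2 + 2/x^2 \<le> 4/x^2" by linarith
  qed simp
  also have "\<dots> = 4 * x powr (a-2)"
  proof -
    have "x powr (a-2) = x powr a / x^2" using x by (simp add: powr_diff powr_numeral)
    then show ?thesis by simp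
  qed
  finally show ?thesis .
qed



definition pdiff :: "real \<Rightarrow> nat \<Rightarrow> real \<Rightarrow> real" where
  "pdiff a m t = (\<Prod>i<m. (a - real i)) * (1+t) powr (a - real m)"

lemma pdiff_deriv: assumes "t > -1"
  shows "(pdiff a m has_real_derivative pdiff a (Suc m) t) (at t)"
proof -
  have d1: "((\<lambda>z. z powr (a - real m)) has_real_derivative (a - real m) * (1+t) powr (a - real m - 1)) (at (1+t))"
    using assms by (intro has_real_derivative_powr) auto
  have d2: "((\<lambda>t. 1 + t) has_real_derivative 1) (at t)" by (auto intro!: derivative_eq_intros)
  have "((\<lambda>t. (\<Prod>i<m. (a - real i)) * (1+t) powr (a - real m)) has_real_derivative
     (\<Prod>i<m. (a - real i)) * ((a - real m) * (1+t) powr (a - real m - 1) * 1)) (at t)"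
    by (intro DERIV_cmult DERIV_chain2[OF d1 d2])
  moreover have "(\<Prod>i<m. (a - real i)) * ((a - real m) * (1+t) powr (a - real m - 1) * 1) = pdiff a (Suc m) t"
  proof -
    have ex: "a - real m - 1 = a - real (Suc m)" by simp
    show ?thesis unfolding pdiff_def prod.lessThan_Suc ex by (simp add: mult.assoc)
  qed
  ultimately have D: "((\<lambda>t. (\<Prod>i<m. (a - real i)) * (1+t) powr (a - real m)) has_real_derivative pdiff a (Suc m) t) (at t)"
    by simp
  have "pdiff a m = (\<lambda>t. (\<Prod>i<m. (a - real i)) * (1+t) powr (a - real m))" by (simp add: pdiff_def fun_eq_iff)
  then show ?thesis using D by simp
qed

lemma pow_taylor: fixes a t :: real assumes a: "0 < a" "a \<le> 1" and t: "t \<ge> -1/2"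
  shows "\<bar>(1+t) powr a - 1 - a*t - a*(a-1)/2*t^2\<bar> \<le> \<bar>t\<bar>^3"
proof (cases "t = 0")
  case True then show ?thesis by simp
next
  case False
  have "\<exists>z. (if t < 0 then t < z \<and> z < 0 else 0 < z \<and> z < t) \<and>
    (\<lambda>t. (1+t) powr a) t = (\<Sum>m<3. (pdiff a m 0 / fact m) * (t - 0)^m) + (pdiff a 3 z / fact 3) * (t - 0)^3"
  proof (rule Taylor[where a="-1/2" and b="max t 0"])
    show "pdiff a 0 = (\<lambda>t. (1+t) powr a)" by (simp add: pdiff_def[abs_def])
    show "\<forall>m s. m < 3 \<and> -1/2 \<le> s \<and> s \<le> max t 0 \<longrightarrow> (pdiff a m has_real_derivative pdiff a (Suc m) s) (at s)"
      by (auto intro!: pdiff_deriv)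
  qed (use t False in auto)
  then obtain z where z: "(if t < 0 then t < z \<and> z < 0 else 0 < z \<and> z < t)"
    and eq: "(1+t) powr a = (\<Sum>m<3. (pdiff a m 0 / fact m) * (t - 0)^m) + (pdiff a 3 z / fact 3) * (t - 0)^3"
    by auto
  have zz: "z > -1/2" using z t by (auto split: if_splits)
  have s: "(\<Sum>m<3. (pdiff a m 0 / fact m) * (t - 0)^m) = 1 + a*t + a*(a-1)/2*t^2"
    by (simp add: pdiff_def eval_nat_numeral lessThan_Suc fact_numeral algebra_simps)
  have p3: "pdiff a 3 z = a*(a-1)*(a-2) * (1+z) powr (a-3)"
    by (simp add: pdiff_def eval_nat_numeral lessThan_Suc algebra_simps)
  have e0: "\<bar>a*(a-1)*(a-2)\<bar> \<le> 1/2"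
  proof -
    have "0 \<le> (a-1/2)^2" by simp
    moreover have "(a-1/2)^2 = a^2 - a + 1/4" "a*(1-a) = a - a^2" by (simp_all add: power2_eq_square algebra_simps)
    ultimately have h: "a*(1-a) \<le> 1/4" by linarith
    have E: "a*(a-1)*(a-2) = (a*(1-a))*(2-a)" by algebra
    have N: "0 \<le> (a*(1-a))*(2-a)" using a by simp
    have "\<bar>a*(a-1)*(a-2)\<bar> = \<bar>(a*(1-a))*(2-a)\<bar>" by (simp only: E)
    also have "\<dots> = (a*(1-a))*(2-a)" using N by (rule abs_of_nonneg)
    finally have "\<bar>a*(a-1)*(a-2)\<bar> = (a*(1-a))*(2-a)" .
    also have "\<dots> \<le> (1/4)*2" using h a by (intro mult_mono) auto
    finally show ?thesis by simp
  qed
  have pz: "(1+z) powr (a-3) \<le> 8"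
  proof -
    have "(1+z) powr (a-3) \<le> (1/2) powr (a-3)" using zz a by (intro powr_mono2') auto
    also have "(1/2::real) powr (a-3) = 2 powr (3-a)" by (simp add: powr_divide powr_minus_divide[symmetric])
    also have "\<dots> \<le> 2 powr 3" using a by (intro powr_mono) auto
    finally show ?thesis by simp
  qed
  have "\<bar>(1+t) powr a - 1 - a*t - a*(a-1)/2*t^2\<bar> = \<bar>pdiff a 3 z / 6 * t^3\<bar>"
    using eq s by (simp add: fact_numeral)
  also have "\<dots> = \<bar>a*(a-1)*(a-2)\<bar> * (1+z) powr (a-3) / 6 * \<bar>t\<bar>^3" unfolding p3 by (simp add: abs_mult power_abs)
  also have "\<dots> \<le> (1/2) * 8 / 6 * \<bar>t\<bar>^3" using e0 pz by (intro mult_right_mono divide_right_mono mult_mono) auto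
  also have "\<dots> \<le> \<bar>t\<bar>^3" by simp
  finally show ?thesis .
qed

lemma pow_lip: fixes b t :: real assumes b: "-1 \<le> b" "b \<le> 0" and t: "t \<ge> 1/2"
  shows "\<bar>t powr b - 1\<bar> \<le> 2*\<bar>t - 1\<bar>"
proof (cases "t \<ge> 1")
  case True
  have h1: "t powr (-1) \<le> t powr b" by (rule powr_mono) (use True b in auto)
  have h2: "t powr b \<le> t powr 0" by (rule powr_mono) (use True b in auto)
  have h3: "t powr (-1) = 1/t" "t powr 0 = 1" using True by (simp_all add: powr_minus_divide)
  have "1/t \<le> t powr b" "t powr b \<le> 1" using h1 h2 h3 by linarith+
  moreover have "1 - 1/t \<le> t - 1"
  proof -
    have "0 \<le> (t-1)^2/t" using True by simp
    moreover have "(t-1)^2/t = t - 2 + 1/t" using True by (simp add: field_simps power2_eq_square)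
    ultimately show ?thesis by linarith
  qed
  moreover have habs: "2*\<bar>t - 1\<bar> = 2*t - 2" using True by simp
  ultimately show ?thesis using True unfolding habs by (intro abs_leI) linarith+
next
  case False
  have h1: "t powr 0 \<le> t powr b" by (rule powr_mono') (use False b t in auto)
  have h2: "t powr b \<le> t powr (-1)" by (rule powr_mono') (use False b t in auto)
  have h3: "t powr (-1) = 1/t" "t powr 0 = 1" using t by (simp_all add: powr_minus_divide)
  have "1 \<le> t powr b" "t powr b \<le> 1/t" using h1 h2 h3 by linarith+
  moreover have "1/t - 1 \<le> 2 - 2*t"
  proof -
    have "0 \<le> (2*t-1)*(1-t)" using t False by simp
    moreover have "(2*t-1)*(1-t) = t*(3-2*t) - 1" by (simp add: algebra_simps)
    ultimately have "1 \<le> t*(3-2*t)" by linarith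
    then have "1/t \<le> 3 - 2*t" using t by (simp add: divide_le_eq mult.commute)
    then show ?thesis by (simp add: algebra_simps)
  qed
  moreover have habs: "2*\<bar>t - 1\<bar> = 2 - 2*t" using False by simp
  ultimately show ?thesis using False unfolding habs by (intro abs_leI) linarith+
qed



definition bp :: "real \<Rightarrow> nat \<Rightarrow> nat \<Rightarrow> real" where
  "bp p d n = real (d choose n) * p^n * (1-p)^(d-n)"

definition ff :: "nat \<Rightarrow> nat \<Rightarrow> real" where
  "ff n j = (\<Prod>i<j. (real n - real i))"

lemma ff_Suc: "ff (Suc n) (Suc j) = real (Suc n) * ff n j"
  unfolding ff_def prod.lessThan_Suc_shift by simp

lemma ff_0_Suc: "ff 0 (Suc j) = 0"
  unfolding ff_def prod.lessThan_Suc_shift by simp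

lemma bp_sum1: "(\<Sum>n\<le>d. bp p d n) = 1"
  using binomial_ring[of p "1-p" d] by (simp add: bp_def atLeast0AtMost mult.assoc)

lemma bp_Suc: "bp p (Suc e) (Suc n) * real (Suc n) = real (Suc e) * p * bp p e n"
proof -
  have "real (Suc n) * real (Suc e choose Suc n) = real (Suc e) * real (e choose n)"
    using Suc_times_binomial[of n e] by (metis of_nat_mult)
  then have H: "real (Suc n) * real (Suc e choose Suc n) = real (Suc e) * real (e choose n)" .
  have "bp p (Suc e) (Suc n) * real (Suc n) = (real (Suc n) * real (Suc e choose Suc n)) * (p * p^n) * (1-p)^(e-n)"
    unfolding bp_def by (simp only: diff_Suc_Suc power_Suc mult_ac)
  also have "\<dots> = real (Suc e) * p * bp p e n" unfolding H bp_def by (simp only: mult_ac)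
  finally show ?thesis .
qed

lemma ff_moment: "(\<Sum>n\<le>d. bp p d n * ff n j) = ff d j * p^j"
proof (induction j arbitrary: d)
  case 0
  then show ?case using bp_sum1 by (simp add: ff_def)
next
  case (Suc j)
  show ?case
  proof (cases d)
    case 0
    then show ?thesis by (simp add: ff_0_Suc)
  next
    case (Suc e)
    have "(\<Sum>n\<le>Suc e. bp p (Suc e) n * ff n (Suc j)) = bp p (Suc e) 0 * ff 0 (Suc j) + (\<Sum>n\<le>e. bp p (Suc e) (Suc n) * ff (Suc n) (Suc j))"
      by (rule sum.atMost_Suc_shift)
    also have "\<dots> = (\<Sum>n\<le>e. real (Suc e) * p * (bp p e n * ff n j))"
    proof -
      have "bp p (Suc e) (Suc n) * ff (Suc n) (Suc j) = real (Suc e) * p * (bp p e n * ff n j)" for n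
      proof -
        have "bp p (Suc e) (Suc n) * ff (Suc n) (Suc j) = (bp p (Suc e) (Suc n) * real (Suc n)) * ff n j"
          by (simp only: ff_Suc mult.assoc)
        also have "\<dots> = real (Suc e) * p * (bp p e n * ff n j)" by (simp only: bp_Suc mult.assoc)
        finally show ?thesis .
      qed
      then show ?thesis by (simp add: ff_0_Suc)
    qed
    also have "\<dots> = real (Suc e) * p * (ff e j * p^j)" by (simp add: sum_distrib_left[symmetric] Suc.IH)
    also have "\<dots> = ff (Suc e) (Suc j) * p^(Suc j)" by (simp add: ff_Suc)
    finally show ?thesis using Suc by simp
  qed
qed

lemma ff_small: "ff n 0 = 1" "ff n 1 = real n" "ff n (Suc 0) = real n" "ff n 2 = real n * (real n - 1)"
  "ff n 3 = real n * (real n - 1) * (real n - 2)" "ff n 4 = real n * (real n - 1) * (real n - 2) * (real n - 3)"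
  by (simp_all add: ff_def eval_nat_numeral lessThan_Suc algebra_simps)

lemma quart_id: fixes x m :: real shows
  "(x-m)^4 = x*(x-1)*(x-2)*(x-3) + (6-4*m)*(x*(x-1)*(x-2)) + (7-12*m+6*m^2)*(x*(x-1)) + (1-4*m+6*m^2-4*m^3)*x + m^4"
  by algebra

lemma sq_id: fixes x m :: real shows "(x-m)^2 = x*(x-1) + (1-2*m)*x + m^2"
  by algebra

lemma bp_var: "(\<Sum>n\<le>d. bp p d n * (real n - real d * p)^2) = real d * p * (1-p)"
proof -
  let ?m = "real d * p"
  have "(\<Sum>n\<le>d. bp p d n * (real n - ?m)^2) = (\<Sum>n\<le>d. bp p d n * ff n 2 + (1-2*?m) * (bp p d n * ff n 1) + ?m^2 * bp p d n)"
    by (rule sum.cong) (simp_all add: ff_small sq_id algebra_simps)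
  also have "\<dots> = ff d 2 * p^2 + (1-2*?m) * (ff d 1 * p^1) + ?m^2"
    by (simp add: sum.distrib sum_distrib_left[symmetric] ff_moment bp_sum1)
  also have "\<dots> = real d * p * (1-p)" by (simp add: ff_small) algebra
  finally show ?thesis .
qed

lemma bp_m4: "(\<Sum>n\<le>d. bp p d n * (real n - real d * p)^4) = real d * (p*(1-p)) + 3 * real d * (real d - 2) * (p*(1-p))^2"
proof -
  let ?m = "real d * p"
  have "(\<Sum>n\<le>d. bp p d n * (real n - ?m)^4) = (\<Sum>n\<le>d. bp p d n * ff n 4 + (6-4*?m) * (bp p d n * ff n 3)
     + (7-12*?m+6*?m^2) * (bp p d n * ff n 2) + (1-4*?m+6*?m^2-4*?m^3) * (bp p d n * ff n 1) + ?m^4 * bp p d n)"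
    by (rule sum.cong) (simp_all add: ff_small quart_id algebra_simps)
  also have "\<dots> = ff d 4 * p^4 + (6-4*?m) * (ff d 3 * p^3) + (7-12*?m+6*?m^2) * (ff d 2 * p^2) + (1-4*?m+6*?m^2-4*?m^3) * (ff d 1 * p^1) + ?m^4"
    by (simp add: sum.distrib sum_distrib_left[symmetric] ff_moment bp_sum1)
  also have "\<dots> = real d * (p*(1-p)) + 3 * real d * (real d - 2) * (p*(1-p))^2" by (simp add: ff_small) algebra
  finally show ?thesis .
qed



definition Gr :: "real \<Rightarrow> nat \<Rightarrow> real" where
  "Gr a n = Gamma (real n/2 + a) / Gamma (real n/2)"

lemma abs_le_help: fixes u v e :: real shows "\<bar>u - v\<bar> \<le> e \<Longrightarrow> \<bar>u\<bar> \<le> \<bar>v\<bar> + e"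
  by (smt (verit))

lemma abs_tri3: fixes u v w :: real shows "\<bar>u - w\<bar> \<le> \<bar>u - v\<bar> + \<bar>v - w\<bar>"
  by (smt (verit))

lemma cab: fixes a :: real assumes a: "0 < a" "a \<le> 1"
  shows "-1/4 \<le> a*(a-1)" "a*(a-1) \<le> 0" "\<bar>a*(a-1)\<bar> \<le> 1/4"
proof -
  have "0 \<le> (a-1/2)^2" by simp
  moreover have "(a-1/2)^2 = a*(a-1) + 1/4" by (simp add: power2_eq_square algebra_simps)
  ultimately show h: "-1/4 \<le> a*(a-1)" by linarith
  show h2: "a*(a-1) \<le> 0" using a by (simp add: mult_nonneg_nonpos)
  show "\<bar>a*(a-1)\<bar> \<le> 1/4" using h h2 by linarith
qed

lemma Gr_large: fixes a :: real assumes a: "0 < a" "a \<le> 1" and n: "n \<ge> 4"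
  shows "\<bar>Gr a n - (real n/2) powr a * (1 + a*(a-1)/real n)\<bar> \<le> 4*(real n/2) powr (a-2)"
proof -
  have x: "real n/2 \<ge> 2" using n by simp
  have "2*(real n/2) = real n" by simp
  then show ?thesis using gamma_ratio[OF a x] unfolding Gr_def by simp
qed

lemma Gr_crude: fixes a :: real assumes a: "0 < a" "a \<le> 1"
  shows "\<exists>C\<ge>0. \<forall>n. \<bar>Gr a n\<bar> \<le> (real n/2) powr a + C"
proof -
  define C where "C = 4 + \<bar>Gr a 0\<bar> + \<bar>Gr a 1\<bar> + \<bar>Gr a 2\<bar> + \<bar>Gr a 3\<bar>"
  have C0: "C \<ge> 0" unfolding C_def by simp
  have "\<bar>Gr a n\<bar> \<le> (real n/2) powr a + C" for n
  proof (cases "n \<ge> 4")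
    case True
    define x where "x = real n/2"
    have x: "x \<ge> 2" using True x_def by simp
    have c: "0 \<le> 1 + a*(a-1)/real n" "1 + a*(a-1)/real n \<le> 1"
    proof -
      have "a*(a-1) \<le> 0" using a by (simp add: mult_nonneg_nonpos)
      then show "1 + a*(a-1)/real n \<le> 1" by (simp add: divide_nonpos_nonneg)
      have "-1 \<le> a*(a-1)" using cab[OF a] by linarith
      then have "-1/real n \<le> a*(a-1)/real n" by (intro divide_right_mono) auto
      moreover have "-1/real n \<ge> -1" using True by (simp add: field_simps)
      ultimately show "0 \<le> 1 + a*(a-1)/real n" by linarith
    qed
    have xp: "0 \<le> x powr a" by simp
    have "x powr a * (1 + a*(a-1)/real n) \<le> x powr a" using c xp by (simp add: mult_left_le)
    moreover have "0 \<le> x powr a * (1 + a*(a-1)/real n)" using c xp by simp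
    moreover have "x powr (a-2) \<le> 1"
    proof -
      have "x powr (a-2) \<le> x powr 0" by (rule powr_mono) (use x a in auto)
      then show ?thesis using x by simp
    qed
    ultimately have "\<bar>x powr a * (1 + a*(a-1)/real n)\<bar> + 4 * x powr (a-2) \<le> x powr a + 4" by linarith
    moreover have "\<bar>Gr a n\<bar> \<le> \<bar>x powr a * (1 + a*(a-1)/real n)\<bar> + 4 * x powr (a-2)"
      using abs_le_help[OF Gr_large[OF a True]] unfolding x_def .
    ultimately show ?thesis unfolding C_def x_def by simp
  next
    case False
    then have "n = 0 \<or> n = 1 \<or> n = 2 \<or> n = 3" by auto
    moreover have "0 \<le> (real n/2) powr a" by simp
    ultimately show ?thesis unfolding C_def by auto
  qed
  with C0 show ?thesis by blast
qed

lemma pointwise1: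
  fixes a \<mu> C :: real and n :: nat
  assumes a: "0 < a" "a \<le> 1" and mu: "\<mu> \<ge> 16" and C: "C \<ge> 0" "\<forall>n. \<bar>Gr a n\<bar> \<le> (real n/2) powr a + C"
  shows "\<bar>Gr a n - 2 powr (-a) * \<mu> powr a * (1 + a*((real n - \<mu>)/\<mu>) + a*(a-1)/2*((real n - \<mu>)/\<mu>)^2 + a*(a-1)/\<mu>)\<bar>
     \<le> \<mu> powr a * (64/\<mu>^2 + \<bar>(real n - \<mu>)/\<mu>\<bar>^3 + 2*\<bar>(real n - \<mu>)/\<mu>\<bar>/\<mu> + (16*(5+C))*((real n - \<mu>)/\<mu>)^4)"
proof -
  define t where "t = (real n - \<mu>)/\<mu>"
  define M where "M = \<mu> powr a"
  define Q where "Q = 2 powr (-a)"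
  define c where "c = a*(a-1)"
  define K4 where "K4 = 16*(5+C)"
  have mu0: "\<mu> > 0" using mu by simp
  have nt: "real n = \<mu>*(1+t)" unfolding t_def using mu0 by (simp add: field_simps)
  have M1: "M \<ge> 1" unfolding M_def using mu a by (intro ge_one_powr_ge_zero) auto
  have Q1: "0 < Q" "Q \<le> 1"
  proof -
    show "0 < Q" unfolding Q_def by simp
    have "1 \<le> 2 powr a" using a by (intro ge_one_powr_ge_zero) auto
    then show "Q \<le> 1" unfolding Q_def by (simp add: powr_minus_divide)
  qed
  have cb: "\<bar>c\<bar> \<le> 1/4" "c \<le> 0" using cab[OF a] unfolding c_def by auto
  have K40: "K4 \<ge> 0" using C unfolding K4_def by simp
  have "\<bar>Gr a n - Q*M*(1 + a*t + c/2*t^2 + c/\<mu>)\<bar> \<le> M*(64/\<mu>^2 + \<bar>t\<bar>^3 + 2*\<bar>t\<bar>/\<mu> + K4*t^4)"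
  proof (cases "real n \<ge> \<mu>/2")
    case True
    have t2: "t \<ge> -1/2" using True mu0 unfolding t_def by (simp add: field_simps)
    have n4: "n \<ge> 4" using True mu by linarith
    define x where "x = real n/2"
    have x0: "x > 0" "x \<ge> \<mu>/4" using True mu unfolding x_def by auto
    have t1: "1 + t > 0" using t2 by simp
    have pA: "x powr a = Q*M*(1+t) powr a"
    proof -
      have "x powr a = (real n) powr a / 2 powr a" unfolding x_def by (rule powr_divide)
      also have "(real n) powr a = M * (1+t) powr a" unfolding nt M_def using mu0 t1 by (simp add: powr_mult)
      finally show ?thesis unfolding Q_def by (simp add: powr_minus_divide)
    qed
    have pB: "(1+t) powr a = (1+t) powr (a-1) * (1+t)"
    proof -
      have "(1+t) powr a = (1+t) powr ((a-1) + 1)" by simp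
      also have "\<dots> = (1+t) powr (a-1) * (1+t) powr 1" by (rule powr_add)
      finally show ?thesis using t1 by simp
    qed
    have key: "x powr a * (1 + c/real n) = Q*M*((1+t) powr a + c/\<mu> * (1+t) powr (a-1))"
    proof -
      have "x powr a * (1 + c/real n) = Q*M*((1+t) powr a + (1+t) powr (a-1) * (1+t) * c/(\<mu>*(1+t)))"
        unfolding pA nt pB by (simp add: algebra_simps) (simp add: add_divide_distrib)
      also have "(1+t) powr (a-1) * (1+t) * c/(\<mu>*(1+t)) = c/\<mu> * (1+t) powr (a-1)"
      proof -
        have gen: "P*u*cc/(m*u) = cc/m*P" if "u \<noteq> 0" "m \<noteq> 0" for P u cc m :: real using that by (simp add: field_simps)
        show ?thesis by (rule gen) (use t1 mu0 in auto)
      qed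
      finally show ?thesis .
    qed
    have tay: "\<bar>(1+t) powr a - 1 - a*t - c/2*t^2\<bar> \<le> \<bar>t\<bar>^3" unfolding c_def using pow_taylor[OF a t2] by simp
    have lip: "\<bar>(1+t) powr (a-1) - 1\<bar> \<le> 2*\<bar>t\<bar>" using pow_lip[of "a-1" "1+t"] a t2 by simp
    have gx: "\<bar>Gr a n - x powr a * (1 + c/real n)\<bar> \<le> 64*M/\<mu>^2"
    proof -
      have g1: "\<bar>Gr a n - x powr a * (1 + c/real n)\<bar> \<le> 4 * x powr (a-2)" using Gr_large[OF a n4] unfolding x_def c_def .
      have g2: "x powr (a-2) \<le> (\<mu>/4) powr (a-2)" by (rule powr_mono2') (use a x0 mu0 in auto)
      have g3a: "(\<mu>/4) powr (a-2) = \<mu> powr (a-2) / 4 powr (a-2)" by (rule powr_divide)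
      have g3b: "\<mu> powr (a-2) = M / \<mu>^2" unfolding M_def using mu0 by (simp add: powr_diff powr_numeral)
      have g3: "(\<mu>/4) powr (a-2) = (M/\<mu>^2) * (1 / 4 powr (a-2))" unfolding g3a g3b by simp
      have g4: "1 / 4 powr (a-2) \<le> (16::real)"
      proof -
        have "1 / 4 powr (a-2) = (4::real) powr (2-a)" by (simp add: powr_minus_divide[symmetric])
        also have "\<dots> \<le> 4 powr 2" by (rule powr_mono) (use a in auto)
        finally show ?thesis by simp
      qed
      have g5: "(M/\<mu>^2) * (1 / 4 powr (a-2)) \<le> (M/\<mu>^2) * 16" by (rule mult_left_mono) (use g4 M1 mu0 in auto)
      have "x powr (a-2) \<le> M/\<mu>^2*16" using g2 g3 g5 by linarith
      moreover have "64*M/\<mu>^2 = 4*(M/\<mu>^2*16)" by simp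
      ultimately show ?thesis using g1 by linarith
    qed
    have dif: "x powr a * (1 + c/real n) - Q*M*(1 + a*t + c/2*t^2 + c/\<mu>) =
      Q*M*(((1+t) powr a - 1 - a*t - c/2*t^2) + c/\<mu>*((1+t) powr (a-1) - 1))"
      unfolding key by (simp add: algebra_simps)
    have dif2: "\<bar>((1+t) powr a - 1 - a*t - c/2*t^2) + c/\<mu>*((1+t) powr (a-1) - 1)\<bar> \<le> \<bar>t\<bar>^3 + 2*\<bar>t\<bar>/\<mu>"
    proof -
      have "\<bar>c/\<mu>*((1+t) powr (a-1) - 1)\<bar> = \<bar>c\<bar>/\<mu> * \<bar>(1+t) powr (a-1) - 1\<bar>" using mu0 by (simp add: abs_mult)
      also have "\<dots> \<le> (1/4)/\<mu> * (2*\<bar>t\<bar>)" using cb lip mu0 by (intro mult_mono divide_right_mono) auto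
      also have "\<dots> \<le> 2*\<bar>t\<bar>/\<mu>" using mu0 by (simp add: field_simps)
      finally have "\<bar>c/\<mu>*((1+t) powr (a-1) - 1)\<bar> \<le> 2*\<bar>t\<bar>/\<mu>" .
      moreover have "\<bar>((1+t) powr a - 1 - a*t - c/2*t^2) + c/\<mu>*((1+t) powr (a-1) - 1)\<bar> \<le> \<bar>(1+t) powr a - 1 - a*t - c/2*t^2\<bar> + \<bar>c/\<mu>*((1+t) powr (a-1) - 1)\<bar>"
        by (rule abs_triangle_ineq)
      ultimately show ?thesis using tay by linarith
    qed
    have "\<bar>x powr a * (1 + c/real n) - Q*M*(1 + a*t + c/2*t^2 + c/\<mu>)\<bar> \<le> M*(\<bar>t\<bar>^3 + 2*\<bar>t\<bar>/\<mu>)"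
    proof -
      have "\<bar>x powr a * (1 + c/real n) - Q*M*(1 + a*t + c/2*t^2 + c/\<mu>)\<bar> = Q*M*\<bar>((1+t) powr a - 1 - a*t - c/2*t^2) + c/\<mu>*((1+t) powr (a-1) - 1)\<bar>"
        unfolding dif using Q1 M1 by (simp add: abs_mult)
      also have "\<dots> \<le> 1*M*(\<bar>t\<bar>^3 + 2*\<bar>t\<bar>/\<mu>)" using Q1 M1 dif2 by (intro mult_mono) auto
      finally show ?thesis by simp
    qed
    moreover have "0 \<le> M*(K4*t^4)" using M1 K40 by simp
    moreover have "M*(64/\<mu>^2 + \<bar>t\<bar>^3 + 2*\<bar>t\<bar>/\<mu> + K4*t^4) = 64*M/\<mu>^2 + M*(\<bar>t\<bar>^3 + 2*\<bar>t\<bar>/\<mu>) + M*(K4*t^4)"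
      by (simp add: algebra_simps)
    moreover have "\<bar>Gr a n - Q*M*(1 + a*t + c/2*t^2 + c/\<mu>)\<bar> \<le> \<bar>Gr a n - x powr a * (1 + c/real n)\<bar> + \<bar>x powr a * (1 + c/real n) - Q*M*(1 + a*t + c/2*t^2 + c/\<mu>)\<bar>"
      by (rule abs_tri3)
    ultimately show ?thesis using gx by linarith
  next
    case False
    have tb: "-1 \<le> t" "t < -1/2" using False mu0 unfolding t_def by (auto simp: field_simps)
    have tab: "\<bar>t\<bar> \<le> 1" "1/2 \<le> \<bar>t\<bar>" using tb by auto
    have t4: "1 \<le> 16*t^4"
    proof -
      have "(1/2)^4 \<le> \<bar>t\<bar>^4" using tab by (intro power_mono) auto
      moreover have "(1/2::real)^4 = 1/16" by (simp add: power_divide)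
      moreover have "\<bar>t\<bar>^4 = t^4" by (simp add: power_even_abs)
      ultimately show ?thesis by linarith
    qed
    have g1: "\<bar>Gr a n\<bar> \<le> M + C*M"
    proof -
      have "(real n/2) powr a \<le> \<mu> powr a" using False mu0 a by (intro powr_mono2) auto
      moreover have "C \<le> C*M" using C M1 by (simp add: mult_le_cancel_left1)
      moreover have "\<bar>Gr a n\<bar> \<le> (real n/2) powr a + C" using C(2) by blast
      ultimately show ?thesis unfolding M_def by linarith
    qed
    have g2: "\<bar>Q*M*(1 + a*t + c/2*t^2 + c/\<mu>)\<bar> \<le> 4*M"
    proof -
      have "\<bar>a*t\<bar> \<le> 1" using a tab by (simp add: abs_mult mult_le_one)
      moreover have "\<bar>c/2*t^2\<bar> \<le> 1"
      proof -
        have "t^2 \<le> 1" using tab by (simp add: abs_square_le_1)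
        then have "\<bar>c\<bar>/2*t^2 \<le> (1/4)/2*1" using cb by (intro mult_mono divide_right_mono) auto
        then have "\<bar>c\<bar>/2*t^2 \<le> 1" by simp
        then show ?thesis by (simp add: abs_mult)
      qed
      moreover have "\<bar>c/\<mu>\<bar> \<le> 1" using cb mu0 mu by (simp add: abs_div field_simps)
      ultimately have h: "\<bar>1 + a*t + c/2*t^2 + c/\<mu>\<bar> \<le> 4" by (smt (verit))
      have "\<bar>Q*M*(1 + a*t + c/2*t^2 + c/\<mu>)\<bar> = Q*M*\<bar>1 + a*t + c/2*t^2 + c/\<mu>\<bar>" using Q1 M1 by (simp add: abs_mult)
      also have "\<dots> \<le> 1*M*4" using Q1 M1 h by (intro mult_mono) auto
      finally show ?thesis by simp
    qed
    have "(5 + C) * 1 \<le> (5+C) * (16*t^4)" by (rule mult_left_mono) (use t4 C in auto)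
    then have "(5 + C) * M \<le> ((5+C) * (16*t^4)) * M" using M1 by (intro mult_right_mono) auto
    then have k: "(5 + C) * M \<le> M*(K4*t^4)" unfolding K4_def by (simp add: algebra_simps)
    have z: "0 \<le> M*(64/\<mu>^2 + \<bar>t\<bar>^3 + 2*\<bar>t\<bar>/\<mu>)" using M1 mu0 by simp
    have e: "M*(64/\<mu>^2 + \<bar>t\<bar>^3 + 2*\<bar>t\<bar>/\<mu> + K4*t^4) = M*(64/\<mu>^2 + \<bar>t\<bar>^3 + 2*\<bar>t\<bar>/\<mu>) + M*(K4*t^4)"
      by (simp add: algebra_simps)
    have tr: "\<bar>Gr a n - Q*M*(1 + a*t + c/2*t^2 + c/\<mu>)\<bar> \<le> \<bar>Gr a n\<bar> + \<bar>Q*M*(1 + a*t + c/2*t^2 + c/\<mu>)\<bar>"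
      by (rule abs_triangle_ineq4)
    have "(5 + C) * M = M + C*M + 4*M" by (simp add: algebra_simps)
    then show ?thesis using g1 g2 k z e tr by linarith
  qed
  then show ?thesis unfolding t_def M_def Q_def c_def K4_def by simp
qed



lemma cube_split: fixes t s :: real assumes s: "s > 0"
  shows "\<bar>t\<bar>^3 \<le> t^2/s + s*t^4" "\<bar>t\<bar> \<le> 1/s + s*t^2"
proof -
  have t2: "t^2 = \<bar>t\<bar>^2" "t^4 = \<bar>t\<bar>^4" by (simp_all add: power_even_abs)
  show "\<bar>t\<bar>^3 \<le> t^2/s + s*t^4"
  proof (cases "\<bar>t\<bar> * s \<le> 1")
    case True
    have "\<bar>t\<bar>^3 = \<bar>t\<bar>^2 * \<bar>t\<bar>" by (simp add: power3_eq_cube power2_eq_square)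
    also have "\<dots> \<le> \<bar>t\<bar>^2 * (1/s)" using True s by (intro mult_left_mono) (auto simp: field_simps)
    finally have "\<bar>t\<bar>^3 \<le> t^2/s" unfolding t2 by simp
    moreover have "0 \<le> s*t^4" using s by simp
    ultimately show ?thesis by linarith
  next
    case False
    have "\<bar>t\<bar>^3 = \<bar>t\<bar>^3 * 1" by simp
    also have "\<dots> \<le> \<bar>t\<bar>^3 * (\<bar>t\<bar> * s)" using False by (intro mult_left_mono) auto
    also have "\<dots> = s * \<bar>t\<bar>^4" by (simp add: power3_eq_cube power4_eq_xxxx)
    finally have "\<bar>t\<bar>^3 \<le> s*t^4" unfolding t2 by simp
    moreover have "0 \<le> t^2/s" using s by simp
    ultimately show ?thesis by linarith
  qed
  show "\<bar>t\<bar> \<le> 1/s + s*t^2"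
  proof (cases "\<bar>t\<bar> * s \<le> 1")
    case True
    then have "\<bar>t\<bar> \<le> 1/s" using s by (simp add: field_simps)
    moreover have "0 \<le> s*t^2" using s by simp
    ultimately show ?thesis by linarith
  next
    case False
    have "\<bar>t\<bar> = \<bar>t\<bar> * 1" by simp
    also have "\<dots> \<le> \<bar>t\<bar> * (\<bar>t\<bar> * s)" using False by (intro mult_left_mono) auto
    also have "\<dots> = s * t^2" by (simp add: power2_eq_square abs_mult_self_eq)
    finally have "\<bar>t\<bar> \<le> s*t^2" .
    moreover have "0 \<le> 1/s" using s by simp
    ultimately show ?thesis by linarith
  qed
qed

lemma bp_nonneg: assumes "0 \<le> p" "p \<le> 1" shows "0 \<le> bp p d n"
  unfolding bp_def using assms by simp

lemma bp_mean: "(\<Sum>n\<le>d. bp p d n * real n) = real d * p"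
  using ff_moment[of p d 1] by (simp add: ff_small)

lemma main_est:
  fixes a p :: real assumes a: "0 < a" "a \<le> 1" and p: "0 < p" "p \<le> 1/2"
  shows "\<exists>K. \<forall>d. 16 \<le> real d * p \<longrightarrow>
    \<bar>(\<Sum>n\<le>d. bp p d n * Gr a n) - 2 powr (-a) * (real d * p) powr a * (1 + a*(a-1)*(3-p)/(2*(real d * p)))\<bar>
      \<le> K * (real d * p) powr a / (real d * p * sqrt (real d * p))"
proof -
  obtain C where C: "C \<ge> 0" "\<forall>n. \<bar>Gr a n\<bar> \<le> (real n/2) powr a + C" using Gr_crude[OF a] by blast
  define K4 where "K4 = 16*(5+C)"
  have K40: "K4 \<ge> 0" using C unfolding K4_def by simp
  define K where "K = 73 + 4*K4"
  have "\<bar>(\<Sum>n\<le>d. bp p d n * Gr a n) - 2 powr (-a) * (real d * p) powr a * (1 + a*(a-1)*(3-p)/(2*(real d * p)))\<bar>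
      \<le> K * (real d * p) powr a / (real d * p * sqrt (real d * p))" if mu: "16 \<le> real d * p" for d
  proof -
    define \<mu> where "\<mu> = real d * p"
    define s where "s = sqrt \<mu>"
    define M where "M = \<mu> powr a"
    define Q where "Q = 2 powr (-a)"
    define c where "c = a*(a-1)"
    define t where "t n = (real n - \<mu>)/\<mu>" for n
    define ap where "ap n = Q*M*(1 + a*t n + c/2*(t n)^2 + c/\<mu>)" for n
    define W where "W n = 64/\<mu>^2 + ((t n)^2/s + s*(t n)^4) + 2*(1/s + s*(t n)^2)/\<mu> + K4*(t n)^4" for n
    have mu16: "\<mu> \<ge> 16" using mu unfolding \<mu>_def .
    have mu0: "\<mu> > 0" using mu16 by simp
    have ss: "s* s = \<mu>" "s > 0" unfolding s_def using mu0 by auto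
    have s4: "s \<ge> 4" unfolding s_def using mu16 real_sqrt_le_mono[of 16 \<mu>] by simp
    have sle: "s \<le> \<mu>" using ss s4 by (metis mult_le_cancel_right1 order.trans linorder_not_le less_le_trans zero_less_one le_numeral_extra(4) mult.commute less_eq_real_def numeral_le_one_iff semiring_norm(69))
    have M0: "M \<ge> 0" unfolding M_def by simp
    have bp0: "0 \<le> bp p d n" for n using p by (intro bp_nonneg) auto
    have pw: "\<bar>Gr a n - ap n\<bar> \<le> M * W n" for n
    proof -
      have h: "\<bar>Gr a n - ap n\<bar> \<le> M * (64/\<mu>^2 + \<bar>t n\<bar>^3 + 2*\<bar>t n\<bar>/\<mu> + K4*(t n)^4)"
        using pointwise1[OF a mu16 C, of n] unfolding ap_def t_def M_def Q_def c_def K4_def by simp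
      have c1: "\<bar>t n\<bar>^3 \<le> (t n)^2/s + s*(t n)^4" "\<bar>t n\<bar> \<le> 1/s + s*(t n)^2" using cube_split[OF ss(2)] by auto
      have "2*\<bar>t n\<bar>/\<mu> \<le> 2*(1/s + s*(t n)^2)/\<mu>" using c1(2) mu0 by (intro divide_right_mono) auto
      then have "64/\<mu>^2 + \<bar>t n\<bar>^3 + 2*\<bar>t n\<bar>/\<mu> + K4*(t n)^4 \<le> W n" unfolding W_def using c1(1) by linarith
      then have "M * (64/\<mu>^2 + \<bar>t n\<bar>^3 + 2*\<bar>t n\<bar>/\<mu> + K4*(t n)^4) \<le> M * W n" using M0 by (rule mult_left_mono)
      with h show ?thesis by linarith
    qed
    have S0: "(\<Sum>n\<le>d. bp p d n) = 1" by (rule bp_sum1)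
    have S1: "(\<Sum>n\<le>d. bp p d n * t n) = 0"
    proof -
      have "(\<Sum>n\<le>d. bp p d n * t n) = (\<Sum>n\<le>d. bp p d n * real n - \<mu> * bp p d n) / \<mu>"
        unfolding t_def by (simp add: sum_divide_distrib algebra_simps)
      also have "\<dots> = ((\<Sum>n\<le>d. bp p d n * real n) - \<mu> * (\<Sum>n\<le>d. bp p d n)) / \<mu>"
        by (simp add: sum_subtractf sum_distrib_left)
      also have "\<dots> = 0" unfolding bp_mean S0 \<mu>_def by simp
      finally show ?thesis .
    qed
    define S2 where "S2 = (\<Sum>n\<le>d. bp p d n * (t n)^2)"
    define S4 where "S4 = (\<Sum>n\<le>d. bp p d n * (t n)^4)"
    have S2v: "S2 = (1-p)/\<mu>"
    proof -
      have "S2 = (\<Sum>n\<le>d. bp p d n * (real n - \<mu>)^2) / \<mu>^2"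
        unfolding S2_def t_def by (simp add: sum_divide_distrib power_divide)
      also have "\<dots> = \<mu>*(1-p)/\<mu>^2" unfolding \<mu>_def bp_var by simp
      also have "\<dots> = (1-p)/\<mu>" using mu0 by (simp add: power2_eq_square)
      finally show ?thesis .
    qed
    have S4b: "S4 \<le> 4/\<mu>^2"
    proof -
      define r where "r = p*(1-p)"
      have r: "0 \<le> r" "r \<le> p" using p unfolding r_def by (auto simp: mult_le_cancel_left1)
      have "S4 = (\<Sum>n\<le>d. bp p d n * (real n - \<mu>)^4) / \<mu>^4"
        unfolding S4_def t_def by (simp add: sum_divide_distrib power_divide)
      also have "(\<Sum>n\<le>d. bp p d n * (real n - \<mu>)^4) = real d * r + 3 * real d * (real d - 2) * r^2"
        unfolding \<mu>_def r_def by (rule bp_m4)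
      also have "real d * r + 3 * real d * (real d - 2) * r^2 \<le> \<mu> + 3*\<mu>^2"
      proof -
        have "real d * r \<le> real d * p" using r by (intro mult_left_mono) auto
        moreover have "real d * (real d - 2) * r^2 \<le> (real d * real d) * p^2"
        proof -
          have "real d * (real d - 2) \<le> real d * real d" by (simp add: mult_left_mono)
          moreover have "r^2 \<le> p^2" using r by (intro power_mono) auto
          ultimately have "real d * (real d - 2) * r^2 \<le> (real d * real d) * r^2" by (intro mult_right_mono) auto
          also have "\<dots> \<le> (real d * real d) * p^2" using \<open>r^2 \<le> p^2\<close> by (intro mult_left_mono) auto
          finally show ?thesis .
        qed
        ultimately show ?thesis unfolding \<mu>_def by (simp add: power2_eq_square algebra_simps)
      qed
      finally have "S4 \<le> (\<mu> + 3*\<mu>^2)/\<mu>^4" using mu0 by (simp add: divide_right_mono)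
      also have "\<mu> + 3*\<mu>^2 \<le> 4*\<mu>^2" using mu16 by (simp add: power2_eq_square)
      finally have "S4 \<le> 4*\<mu>^2/\<mu>^4" using mu0 by (simp add: divide_right_mono)
      also have "4*\<mu>^2/\<mu>^4 = 4/\<mu>^2" using mu0 by (simp add: field_simps eval_nat_numeral)
      finally show ?thesis .
    qed
    have S20: "0 \<le> S2" "S2 \<le> 1/\<mu>" using S2v p mu0 by (auto intro: divide_right_mono)
    have sum_ap: "(\<Sum>n\<le>d. bp p d n * ap n) = Q*M*(1 + c*(3-p)/(2*\<mu>))"
    proof -
      have "(\<Sum>n\<le>d. bp p d n * ap n) = (\<Sum>n\<le>d. Q*M*bp p d n + (Q*M*a)*(bp p d n * t n) + (Q*M*c/2)*(bp p d n * (t n)^2) + (Q*M*c/\<mu>)*bp p d n)"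
        unfolding ap_def by (rule sum.cong) (simp_all add: algebra_simps)
      also have "\<dots> = Q*M*(\<Sum>n\<le>d. bp p d n) + (Q*M*a)*(\<Sum>n\<le>d. bp p d n * t n) + (Q*M*c/2)*S2 + (Q*M*c/\<mu>)*(\<Sum>n\<le>d. bp p d n)"
        unfolding S2_def by (simp add: sum.distrib sum_distrib_left)
      also have "\<dots> = Q*M*(1 + c*(3-p)/(2*\<mu>))" unfolding S0 S1 S2v using mu0 by (simp add: field_simps)
      finally show ?thesis .
    qed
    have sum_W: "(\<Sum>n\<le>d. bp p d n * W n) = 64/\<mu>^2 + (1/s + 2* s/\<mu>)*S2 + (s + K4)*S4 + 2/(s*\<mu>)"
    proof -
      have "(\<Sum>n\<le>d. bp p d n * W n) = (\<Sum>n\<le>d. (64/\<mu>^2 + 2/(s*\<mu>)) * bp p d n + (1/s + 2* s/\<mu>) * (bp p d n * (t n)^2) + (s + K4) * (bp p d n * (t n)^4))"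
        unfolding W_def using ss mu0 by (intro sum.cong) (simp_all add: field_simps)
      also have "\<dots> = (64/\<mu>^2 + 2/(s*\<mu>)) * (\<Sum>n\<le>d. bp p d n) + (1/s + 2* s/\<mu>)*S2 + (s + K4)*S4"
        unfolding S2_def S4_def by (simp add: sum.distrib sum_distrib_left)
      finally show ?thesis unfolding S0 by simp
    qed
    have W_le: "(\<Sum>n\<le>d. bp p d n * W n) \<le> K/(\<mu>* s)"
    proof -
      have e1: "1/\<mu>^2 \<le> 1/(\<mu>* s)" using sle ss mu0 by (simp add: power2_eq_square frac_le)
      have e2: "s/\<mu>^2 = 1/(\<mu>* s)" unfolding ss(1)[symmetric] using ss(2) by (simp add: power2_eq_square field_simps)
      have "(1/s + 2* s/\<mu>)*S2 \<le> (1/s + 2* s/\<mu>)*(1/\<mu>)" using S20 ss mu0 by (intro mult_left_mono) auto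
      also have "(1/s + 2* s/\<mu>)*(1/\<mu>) = 3/(\<mu>* s)" unfolding ss(1)[symmetric] using ss(2) by (simp add: field_simps)
      finally have t1: "(1/s + 2* s/\<mu>)*S2 \<le> 3/(\<mu>* s)" .
      have "(s + K4)*S4 \<le> (s + K4)*(4/\<mu>^2)" using S4b ss K40 by (intro mult_left_mono) auto
      also have "(s + K4)*(4/\<mu>^2) = 4*(s/\<mu>^2) + 4*K4*(1/\<mu>^2)" by (simp add: algebra_simps add_divide_distrib)
      also have "\<dots> \<le> 4*(1/(\<mu>* s)) + 4*K4*(1/(\<mu>* s))" unfolding e2 using e1 K40 by (intro add_left_mono mult_left_mono) auto
      finally have t2: "(s + K4)*S4 \<le> 4*(1/(\<mu>* s)) + 4*K4*(1/(\<mu>* s))" .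
      have t3: "64/\<mu>^2 \<le> 64*(1/(\<mu>* s))" using e1 by simp
      have t4: "2/(s*\<mu>) = 2*(1/(\<mu>* s))" by (simp add: mult.commute)
      have "K/(\<mu>* s) = (64 + 3 + 4 + 4*K4 + 2)*(1/(\<mu>* s))" unfolding K_def by simp
      also have "\<dots> = 64*(1/(\<mu>* s)) + 3/(\<mu>* s) + 4*(1/(\<mu>* s)) + 4*K4*(1/(\<mu>* s)) + 2*(1/(\<mu>* s))" by (simp add: algebra_simps)
      finally have "K/(\<mu>* s) = 64*(1/(\<mu>* s)) + 3/(\<mu>* s) + 4*(1/(\<mu>* s)) + 4*K4*(1/(\<mu>* s)) + 2*(1/(\<mu>* s))" .
      then show ?thesis unfolding sum_W using t1 t2 t3 t4 by linarith
    qed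
    have "\<bar>(\<Sum>n\<le>d. bp p d n * Gr a n) - Q*M*(1 + c*(3-p)/(2*\<mu>))\<bar> = \<bar>\<Sum>n\<le>d. bp p d n * (Gr a n - ap n)\<bar>"
      unfolding sum_ap[symmetric] by (simp add: sum_subtractf algebra_simps)
    also have "\<dots> \<le> (\<Sum>n\<le>d. \<bar>bp p d n * (Gr a n - ap n)\<bar>)" by (rule sum_abs)
    also have "\<dots> \<le> (\<Sum>n\<le>d. bp p d n * (M * W n))"
      by (rule sum_mono) (simp add: abs_mult bp0 pw mult_left_mono)
    also have "\<dots> = M * (\<Sum>n\<le>d. bp p d n * W n)" by (simp add: sum_distrib_left algebra_simps)
    also have "\<dots> \<le> M * (K/(\<mu>* s))" using W_le M0 by (rule mult_left_mono)
    finally show ?thesis unfolding \<mu>_def[symmetric] M_def[symmetric] s_def[symmetric] Q_def[symmetric] c_def[symmetric] by (simp add: mult.commute)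
  qed
  then show ?thesis by blast
qed



lemma powr_quad: fixes r X :: real assumes r: "r \<le> 0" and X: "\<bar>X\<bar> \<le> 1/2" "\<bar>X\<bar> * (2*\<bar>r\<bar>) \<le> 1"
  shows "\<bar>(1+X) powr r - 1 - r*X\<bar> \<le> (4*r^2 + 2*\<bar>r\<bar>) * X^2"
proof -
  define l where "l = ln (1+X)"
  define w where "w = r*l"
  have X1: "1 + X > 0" using X by auto
  have lX: "\<bar>l - X\<bar> \<le> 2*X^2" unfolding l_def using abs_ln_one_plus_x_minus_x_bound[OF X(1)] .
  have X2: "2*X^2 \<le> \<bar>X\<bar>"
  proof -
    have "2*X^2 = (2*\<bar>X\<bar>)*\<bar>X\<bar>" by (simp add: power2_eq_square abs_mult_self_eq)
    also have "\<dots> \<le> 1*\<bar>X\<bar>" using X by (intro mult_right_mono) auto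
    finally show ?thesis by simp
  qed
  have labs: "\<bar>l\<bar> \<le> 2*\<bar>X\<bar>" using lX X2 by linarith
  have wabs: "\<bar>w\<bar> \<le> 2*\<bar>r\<bar>*\<bar>X\<bar>"
  proof -
    have "\<bar>w\<bar> = \<bar>r\<bar> * \<bar>l\<bar>" unfolding w_def by (simp add: abs_mult)
    also have "\<dots> \<le> \<bar>r\<bar> * (2*\<bar>X\<bar>)" using labs by (intro mult_left_mono) auto
    finally show ?thesis by simp
  qed
  have w1: "w \<le> 1" using wabs X(2) by (smt (verit) mult.commute mult.left_commute)
  have pw: "(1+X) powr r = exp w" unfolding w_def l_def using X1 by (simp add: powr_def mult.commute)
  have e: "\<bar>exp w - 1 - w\<bar> \<le> w^2" by (rule exp_quad[OF w1])
  have w2: "w^2 \<le> 4*r^2*X^2"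
  proof -
    have "w^2 = \<bar>w\<bar>^2" by simp
    also have "\<dots> \<le> (2*\<bar>r\<bar>*\<bar>X\<bar>)^2" using wabs by (intro power_mono) auto
    also have "\<dots> = 4*r^2*X^2" by (simp add: power_mult_distrib power2_abs)
    finally show ?thesis .
  qed
  have wr: "\<bar>w - r*X\<bar> \<le> 2*\<bar>r\<bar>*X^2"
  proof -
    have "\<bar>w - r*X\<bar> = \<bar>r\<bar> * \<bar>l - X\<bar>" unfolding w_def by (simp add: abs_mult right_diff_distrib[symmetric])
    also have "\<dots> \<le> \<bar>r\<bar> * (2*X^2)" using lX by (intro mult_left_mono) auto
    finally show ?thesis by simp
  qed
  have "\<bar>(1+X) powr r - 1 - r*X\<bar> \<le> \<bar>exp w - 1 - w\<bar> + \<bar>w - r*X\<bar>" unfolding pw by (smt (verit))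
  also have "\<dots> \<le> 4*r^2*X^2 + 2*\<bar>r\<bar>*X^2" using e w2 wr by linarith
  also have "\<dots> = (4*r^2 + 2*\<bar>r\<bar>) * X^2" by (simp add: algebra_simps)
  finally show ?thesis .
qed

lemma I0_eq: "I0 q s d = q powr (-s) * 2 powr (s/2) * (\<Sum>n\<le>d. bp (q/2) d n * Gr (s/2) n)"
proof -
  have G0: "Gamma (0::real) = 0" by (rule Gamma_nonpos_Int) simp
  have "(\<Sum>n\<le>d. bp (q/2) d n * Gr (s/2) n) = (\<Sum>n\<in>{0..d}. bp (q/2) d n * Gr (s/2) n)"
    by (simp add: atMost_atLeast0)
  also have "\<dots> = bp (q/2) d 0 * Gr (s/2) 0 + (\<Sum>n\<in>{Suc 0..d}. bp (q/2) d n * Gr (s/2) n)"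
    by (rule sum.atLeast_Suc_atMost) simp
  also have "bp (q/2) d 0 * Gr (s/2) 0 = 0" unfolding Gr_def using G0 by simp
  also have "(\<Sum>n\<in>{Suc 0..d}. bp (q/2) d n * Gr (s/2) n) = (\<Sum>n=1..d. qd q d n * Gamma (real n/2 + s/2) / Gamma (real n/2))"
    by (rule sum.cong) (simp_all add: qd_def bp_def Gr_def)
  finally show ?thesis unfolding I0_def by simp
qed

theorem mainTheorem11:
  fixes q s :: real
  assumes "0 < q" "q \<le> 1" "0 < s" "s \<le> 2"
  shows "(\<lambda>d::nat. (sigma_bar q s d)^2 - 2*q/real d - (2-s)*(6-q)/(2*(real d)^2))
           \<in> o(\<lambda>d. 1/(real d)^2)"
proof -
  define a where "a = s/2"
  define p where "p = q/2"
  have a: "0 < a" "a \<le> 1" using assms unfolding a_def by auto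
  have p: "0 < p" "p \<le> 1/2" using assms unfolding p_def by auto
  define T where "T d = (\<Sum>n\<le>d. bp p d n * Gr a n)" for d
  obtain K where K: "\<forall>d. 16 \<le> real d * p \<longrightarrow>
    \<bar>T d - 2 powr (-a) * (real d * p) powr a * (1 + a*(a-1)*(3-p)/(2*(real d * p)))\<bar>
      \<le> K * (real d * p) powr a / (real d * p * sqrt (real d * p))"
    using main_est[OF a p] unfolding T_def by blast
  define r where "r = -1/a"
  define Cr where "Cr = 4*r^2 + 2*\<bar>r\<bar>"
  define \<kappa> where "\<kappa> = a*(a-1)*(3-p)/2"
  define Q where "Q = (2::real) powr (-a)"
  define K' where "K' = \<bar>K\<bar>/Q"
  define \<delta> where "\<delta> = 1/(2 + 4*\<bar>r\<bar>)"
  have Q0: "Q > 0" unfolding Q_def by simp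
  have d0: "\<delta> > 0" unfolding \<delta>_def by (simp add: add_pos_nonneg)
  define f where "f d = (sigma_bar q s d)^2 - 2*q/real d - (2-s)*(6-q)/(2*(real d)^2)" for d :: nat
  define \<Phi> where "\<Phi> d = 2*q*real d * (Cr*(2*\<kappa>^2/(real d*p)^2 + 2*K'^2/(real d * p * sqrt (real d * p))^2)) + 2*q*real d*\<bar>r\<bar>*K'/(real d*p* sqrt(real d*p))" for d :: nat
  have Phi0: "\<Phi> \<longlonglongrightarrow> 0" unfolding \<Phi>_def using p by real_asymp
  have small: "(\<lambda>d::nat. \<bar>\<kappa>\<bar>/(real d*p) + K'/(real d*p* sqrt(real d*p))) \<longlonglongrightarrow> 0" using p by real_asymp
  have ev1: "eventually (\<lambda>d::nat. \<bar>\<kappa>\<bar>/(real d*p) + K'/(real d*p* sqrt(real d*p)) < \<delta>) sequentially"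
    using order_tendstoD(2)[OF small d0] .
  have ev2: "eventually (\<lambda>d::nat. 16/p \<le> real d) sequentially"
    using filterlim_real_sequentially by (simp add: filterlim_at_top)
  have ev: "eventually (\<lambda>d. norm (f d / (1/(real d)^2)) \<le> \<Phi> d) sequentially"
    using ev1 ev2
  proof eventually_elim
    case (elim d)
    define \<mu> where "\<mu> = real d * p"
    have mu16: "16 \<le> \<mu>" using elim(2) p unfolding \<mu>_def by (simp add: field_simps)
    have mu0: "\<mu> > 0" using mu16 by simp
    have dpos: "real d > 0" using mu0 p unfolding \<mu>_def by (simp add: zero_less_mult_iff)
    define sq where "sq = sqrt \<mu>"
    have sq0: "sq > 0" unfolding sq_def using mu0 by simp
    define M where "M = \<mu> powr a"
    have M0: "M > 0" unfolding M_def using mu0 by simp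
    define e where "e = (T d - Q*M*(1 + \<kappa>/\<mu>))/(Q*M)"
    define X where "X = \<kappa>/\<mu> + e"
    have Kd: "\<bar>T d - Q*M*(1 + \<kappa>/\<mu>)\<bar> \<le> K * M / (\<mu> * sq)"
    proof -
      have kk: "a*(a-1)*(3-p)/(2*\<mu>) = \<kappa>/\<mu>" unfolding \<kappa>_def by simp
      have dp: "16 \<le> real d * p" using mu16 unfolding \<mu>_def .
      have h: "\<bar>T d - 2 powr (-a) * (real d * p) powr a * (1 + a*(a-1)*(3-p)/(2*(real d * p)))\<bar>
        \<le> K * (real d * p) powr a / (real d * p * sqrt (real d * p))" using K dp by blast
      show ?thesis using h unfolding \<mu>_def[symmetric] M_def[symmetric] sq_def[symmetric] Q_def[symmetric] kk .
    qed
    have eb: "\<bar>e\<bar> \<le> K'/(\<mu>* sq)"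
    proof -
      have "\<bar>e\<bar> = \<bar>T d - Q*M*(1 + \<kappa>/\<mu>)\<bar> / (Q*M)" unfolding e_def using Q0 M0 by (simp add: abs_div)
      also have "\<dots> \<le> (K * M / (\<mu> * sq)) / (Q*M)" using Kd Q0 M0 by (intro divide_right_mono) auto
      also have "\<dots> \<le> (\<bar>K\<bar> * M / (\<mu> * sq)) / (Q*M)" using Q0 M0 mu0 sq0 by (intro divide_right_mono) (auto intro!: mult_right_mono)
      also have "\<dots> = K'/(\<mu>* sq)" unfolding K'_def using Q0 M0 by (simp add: field_simps)
      finally show ?thesis .
    qed
    have TX: "T d = Q*M*(1+X)" unfolding X_def e_def using Q0 M0 by (simp add: field_simps)
    have Xb: "\<bar>X\<bar> \<le> \<bar>\<kappa>\<bar>/\<mu> + K'/(\<mu>* sq)"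
    proof -
      have "\<bar>X\<bar> \<le> \<bar>\<kappa>/\<mu>\<bar> + \<bar>e\<bar>" unfolding X_def by (rule abs_triangle_ineq)
      moreover have "\<bar>\<kappa>/\<mu>\<bar> = \<bar>\<kappa>\<bar>/\<mu>" using mu0 by simp
      ultimately show ?thesis using eb by linarith
    qed
    have Xd: "\<bar>X\<bar> \<le> \<delta>" using Xb elim(1) unfolding \<mu>_def sq_def by simp
    have X12: "\<bar>X\<bar> \<le> 1/2" "\<bar>X\<bar> * (2*\<bar>r\<bar>) \<le> 1"
    proof -
      have "\<delta> \<le> 1/2" unfolding \<delta>_def by (simp add: field_simps)
      then show "\<bar>X\<bar> \<le> 1/2" using Xd by simp
      have "\<delta> * (2*\<bar>r\<bar>) \<le> 1" unfolding \<delta>_def by (simp add: field_simps)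
      moreover have "\<bar>X\<bar> * (2*\<bar>r\<bar>) \<le> \<delta> * (2*\<bar>r\<bar>)" using Xd by (intro mult_right_mono) auto
      ultimately show "\<bar>X\<bar> * (2*\<bar>r\<bar>) \<le> 1" by linarith
    qed
    have X1: "1 + X > 0" using X12 by auto
    define Z where "Z = real d/(2*q)"
    have Z0: "Z > 0" unfolding Z_def using dpos assms by simp
    have I0Z: "I0 q s d = Z powr a * (1+X)"
    proof -
      have "I0 q s d = q powr (-s) * 2 powr (s/2) * T d" unfolding I0_eq T_def a_def p_def ..
      also have "\<dots> = (q powr (-s) * \<mu> powr a) * (2 powr a * Q) * (1+X)" unfolding TX M_def a_def by (simp add: mult_ac)
      also have "2 powr a * Q = 1" unfolding Q_def by (simp add: powr_minus_divide)
      also have "q powr (-s) * \<mu> powr a = Z powr a"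
      proof -
        have "\<mu> = Z * q^2" unfolding \<mu>_def Z_def p_def using assms by (simp add: field_simps power2_eq_square)
        then have "\<mu> powr a = Z powr a * (q^2) powr a" using Z0 assms by (simp add: powr_mult)
        moreover have "(q^2) powr a = q powr s"
        proof -
          have "q^2 = q powr 2" using assms by (simp add: powr_numeral)
          then have "(q^2) powr a = q powr (2*a)" by (simp add: powr_powr)
          then show ?thesis unfolding a_def by simp
        qed
        moreover have "q powr (-s) * q powr s = 1" using assms by (simp add: powr_minus_divide)
        ultimately show ?thesis by (simp add: mult_ac)
      qed
      finally show ?thesis by simp
    qed
    have sig: "(sigma_bar q s d)^2 = (2*q/real d) * (1+X) powr r"
    proof -
      have I0p: "I0 q s d > 0" unfolding I0Z using Z0 X1 by simp
      have "(sigma_bar q s d)^2 = I0 q s d powr (-1/s) * I0 q s d powr (-1/s)" unfolding sigma_bar_def by (simp add: power2_eq_square)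
      also have "\<dots> = I0 q s d powr (-1/a)" unfolding a_def by (simp add: powr_add[symmetric])
      also have "\<dots> = (Z powr a) powr (-1/a) * (1+X) powr r" unfolding I0Z r_def using Z0 X1 by (simp add: powr_mult)
      also have "(Z powr a) powr (-1/a) = 1/Z" using a Z0 by (simp add: powr_powr powr_minus_divide)
      also have "1/Z = 2*q/real d" unfolding Z_def by simp
      finally show ?thesis .
    qed
    have c0: "(2-s)*(6-q)/(2*(real d)^2) = (2*q/real d) * (r * (\<kappa>/\<mu>))"
      unfolding r_def \<kappa>_def \<mu>_def p_def using a dpos assms unfolding a_def by (simp add: field_simps power2_eq_square)
    have fd: "f d = (2*q/real d) * (((1+X) powr r - 1 - r*X) + r*e)"
      unfolding f_def sig c0 X_def by (simp add: algebra_simps add_divide_distrib)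
    have pq: "\<bar>(1+X) powr r - 1 - r*X\<bar> \<le> Cr * X^2" unfolding Cr_def
      by (rule powr_quad) (use a X12 in \<open>auto simp: r_def\<close>)
    have X2: "X^2 \<le> 2*(\<kappa>/\<mu>)^2 + 2*e^2"
    proof -
      have "0 \<le> (\<kappa>/\<mu> - e)^2" by simp
      then show ?thesis unfolding X_def power2_sum power2_diff by (smt (verit))
    qed
    have Cr0: "Cr \<ge> 0" unfolding Cr_def by simp
    have e2: "e^2 \<le> (K'/(\<mu>* sq))^2"
    proof -
      have "e^2 = \<bar>e\<bar>^2" by simp
      also have "\<dots> \<le> (K'/(\<mu>* sq))^2" using eb by (intro power_mono) auto
      finally show ?thesis .
    qed
    have A: "\<bar>f d\<bar> \<le> (2*q/real d) * (Cr*X^2 + \<bar>r\<bar>*\<bar>e\<bar>)"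
    proof -
      have "\<bar>f d\<bar> = (2*q/real d) * \<bar>((1+X) powr r - 1 - r*X) + r*e\<bar>" unfolding fd using assms dpos by (simp add: abs_mult)
      also have "\<bar>((1+X) powr r - 1 - r*X) + r*e\<bar> \<le> Cr*X^2 + \<bar>r\<bar>*\<bar>e\<bar>"
      proof -
        have "\<bar>((1+X) powr r - 1 - r*X) + r*e\<bar> \<le> \<bar>(1+X) powr r - 1 - r*X\<bar> + \<bar>r*e\<bar>" by (rule abs_triangle_ineq)
        then show ?thesis using pq by (simp add: abs_mult)
      qed
      then have "(2*q/real d) * \<bar>((1+X) powr r - 1 - r*X) + r*e\<bar> \<le> (2*q/real d) * (Cr*X^2 + \<bar>r\<bar>*\<bar>e\<bar>)"
        using assms dpos by (intro mult_left_mono) auto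
      finally show ?thesis .
    qed
    have B: "Cr*X^2 + \<bar>r\<bar>*\<bar>e\<bar> \<le> Cr*(2*\<kappa>^2/\<mu>^2 + 2*K'^2/(\<mu>* sq)^2) + \<bar>r\<bar>*(K'/(\<mu>* sq))"
    proof -
      have "X^2 \<le> 2*\<kappa>^2/\<mu>^2 + 2*K'^2/(\<mu>* sq)^2" using X2 e2 by (simp add: power_divide)
      then have "Cr*X^2 \<le> Cr*(2*\<kappa>^2/\<mu>^2 + 2*K'^2/(\<mu>* sq)^2)" using Cr0 by (rule mult_left_mono)
      moreover have "\<bar>r\<bar>*\<bar>e\<bar> \<le> \<bar>r\<bar>*(K'/(\<mu>* sq))" using eb by (intro mult_left_mono) auto
      ultimately show ?thesis by linarith
    qed
    have "norm (f d / (1/(real d)^2)) = (real d)^2 * \<bar>f d\<bar>" by (simp add: abs_mult)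
    also have "\<dots> \<le> (real d)^2 * ((2*q/real d) * (Cr*X^2 + \<bar>r\<bar>*\<bar>e\<bar>))" using A by (intro mult_left_mono) auto
    also have "\<dots> = 2*q*real d * (Cr*X^2 + \<bar>r\<bar>*\<bar>e\<bar>)" using dpos by (simp add: power2_eq_square)
    also have "\<dots> \<le> 2*q*real d * (Cr*(2*\<kappa>^2/\<mu>^2 + 2*K'^2/(\<mu>* sq)^2) + \<bar>r\<bar>*(K'/(\<mu>* sq)))"
      using B assms dpos by (intro mult_left_mono) auto
    also have "\<dots> = \<Phi> d" unfolding \<Phi>_def \<mu>_def[symmetric] sq_def[symmetric] by (simp add: algebra_simps)
    finally show ?case .
  qed
  have "(\<lambda>d. f d / (1/(real d)^2)) \<longlonglongrightarrow> 0" by (rule Lim_null_comparison[OF ev Phi0])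
  moreover have "eventually (\<lambda>d::nat. 1/(real d)^2 \<noteq> 0) sequentially"
    using eventually_gt_at_top[of "0::nat"] by eventually_elim simp
  ultimately have "f \<in> o(\<lambda>d. 1/(real d)^2)" by (rule smalloI_tendsto)
  then show ?thesis unfolding f_def .
qed


end
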